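(* Let $H=\sum_{i=1}^m H_i$ be an instance of the $k$-local Hamiltonian problem on $n$ qubits and let $a\ge 0$. If there exists a state $|\Gamma\rangle$ such that $\langle\Gamma|H|\Gamma\rangle\le am$, then there exists a strategy for the $r$ entangled provers in Protocol $P$ that is accepted with probability at least $1-a/2$.
   Context: An instance of the $k$-local Hamiltonian problem on $n$ qubits is $H=\sum_{i=1}^m H_i$ on $(\mathbb{C}^2)^{\otimes n}$, each $H_i$ positive semidefinite of operator norm at most $1$ acting on a set $S_i\subseteq[n]$ of at most $k$ qubits (tensored with identity elsewhere). Let $\mathcal{C}$ be a quantum error-correcting code encoding $1$ logical qubit into $r$ physical qubits, which corrects all single-qubit Pauli errors and such that every codeword has maximally mixed reduced density matrix $I/2$ on any single qubit (e.g. the $5$-qubit code, $r=5$). Protocol $P$ (one round, $r$ provers who may share entanglement but not communicate): the verifier performs each of the following two tests with probability $1/2$. Test 1: pick $j\in[m]$ uniformly; ask every prover for its share of all qubits in $S_j$; decode each group of $r$ shares (one per prover) of each qubit of $S_j$ with the decoding map of $\mathcal{C}$, measure the resulting $k$-qubit state with $\{H_j, I-H_j\}$, and reject if the outcome is $H_j$. Test 2: pick $i\in[n]$ uniformly and a set $S\subseteq[n]$ of size $k$ uniformly among those containing $i$; with probability $1/2$ ask one uniformly random prover for its shares of all qubits in $S$ and the other $r-1$ provers for their share of qubit $i$ only; with probability $1/2$ ask all provers for their share of qubit $i$; in both cases reject unless the $r$ received shares of qubit $i$ lie in the codespace of $\mathcal{C}$ (projective measurement onto the codespace). *)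

theory Defs
  imports Complex_Main "HOL-Library.FuncSet"
begin

text \<open>A computational basis state of a register whose qubits are labelled by elements of a
finite set L of labels is a function from labels to bool that is False outside L.\<close>

type_synonym 'l bstate = "'l \<Rightarrow> bool"
type_synonym 'l qstate = "'l bstate \<Rightarrow> complex"
type_synonym 'l qop = "'l bstate \<Rightarrow> 'l bstate \<Rightarrow> complex"

definition basis :: "'l set \<Rightarrow> 'l bstate set" where
  "basis L = {x. \<forall>l. l \<notin> L \<longrightarrow> x l = False}"

definition restr :: "'l set \<Rightarrow> 'l bstate \<Rightarrow> 'l bstate" where
  "restr S x = (\<lambda>l. if l \<in> S then x l else False)"

definition merge :: "'l set \<Rightarrow> 'l bstate \<Rightarrow> 'l bstate \<Rightarrow> 'l bstate" where
  "merge A y z = (\<lambda>l. if l \<in> A then y l else z l)"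

definition apply_op :: "'l set \<Rightarrow> 'l qop \<Rightarrow> 'l qstate \<Rightarrow> 'l qstate" where
  "apply_op L A \<psi> = (\<lambda>x. \<Sum>y\<in>basis L. A x y * \<psi> y)"

definition inner :: "'l set \<Rightarrow> 'l qstate \<Rightarrow> 'l qstate \<Rightarrow> complex" where
  "inner L \<phi> \<psi> = (\<Sum>x\<in>basis L. cnj (\<phi> x) * \<psi> x)"

definition nrm2 :: "'l set \<Rightarrow> 'l qstate \<Rightarrow> real" where
  "nrm2 L \<psi> = (\<Sum>x\<in>basis L. (cmod (\<psi> x))\<^sup>2)"

text \<open>An operator acting on the qubits S (tensored with the identity on all other qubits).\<close>
definition lift :: "'l set \<Rightarrow> 'l qop \<Rightarrow> 'l qop" where
  "lift S A = (\<lambda>x y. if (\<forall>l. l \<notin> S \<longrightarrow> x l = y l) then A (restr S x) (restr S y) else 0)"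

definition hermitian :: "'l set \<Rightarrow> 'l qop \<Rightarrow> bool" where
  "hermitian L A \<longleftrightarrow> (\<forall>x\<in>basis L. \<forall>y\<in>basis L. A x y = cnj (A y x))"

definition psd :: "'l set \<Rightarrow> 'l qop \<Rightarrow> bool" where
  "psd L A \<longleftrightarrow> hermitian L A \<and> (\<forall>\<psi>. 0 \<le> Re (inner L \<psi> (apply_op L A \<psi>)))"

definition opnorm_le1 :: "'l set \<Rightarrow> 'l qop \<Rightarrow> bool" where
  "opnorm_le1 L A \<longleftrightarrow> (\<forall>\<psi>. nrm2 L (apply_op L A \<psi>) \<le> nrm2 L \<psi>)"

definition unitary_on :: "'l set \<Rightarrow> 'l qop \<Rightarrow> bool" where
  "unitary_on L U \<longleftrightarrow>
     (\<forall>x\<in>basis L. \<forall>y\<in>basis L.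
        (\<Sum>z\<in>basis L. cnj (U z x) * U z y) = (if x = y then 1 else 0)) \<and>
     (\<forall>x\<in>basis L. \<forall>y\<in>basis L.
        (\<Sum>z\<in>basis L. U x z * cnj (U y z)) = (if x = y then 1 else 0))"

definition klh_instance ::
  "nat \<Rightarrow> nat \<Rightarrow> nat \<Rightarrow> (nat \<Rightarrow> nat set) \<Rightarrow> (nat \<Rightarrow> nat qop) \<Rightarrow> bool" where
  "klh_instance n k m S h \<longleftrightarrow>
     (\<forall>j<m. S j \<subseteq> {..<n} \<and> card (S j) \<le> k \<and> psd (S j) (h j) \<and> opnorm_le1 (S j) (h j))"

definition hamiltonian :: "nat \<Rightarrow> (nat \<Rightarrow> nat set) \<Rightarrow> (nat \<Rightarrow> nat qop) \<Rightarrow> nat qop" where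
  "hamiltonian m S h = (\<lambda>x y. \<Sum>j<m. lift (S j) (h j) x y)"

text \<open>The code is given by its encoding (codewords enc False, enc True, an orthonormal
basis of the codespace) and its decoding map, a quantum channel from r qubits to one
qubit given by Kraus operators K t (t in T): K t b x is the entry for logical basis
state b and physical basis state x.\<close>

definition pauli :: "nat \<Rightarrow> bool \<Rightarrow> bool \<Rightarrow> complex" where
  "pauli P b c =
    (if P = 0 then (if b = c then 1 else 0)
     else if P = 1 then (if b \<noteq> c then 1 else 0)
     else if P = 2 then (if b = c then 0 else if b then \<i> else - \<i>)
     else (if b = c then (if b then -1 else 1) else 0))"

text \<open>Single-qubit Pauli P (0=I,1=X,2=Y,3=Z) acting on physical qubit q.\<close>
definition single_qubit_op :: "nat \<Rightarrow> (bool \<Rightarrow> bool \<Rightarrow> complex) \<Rightarrow> nat qop" where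
  "single_qubit_op q P = (\<lambda>x y. if (\<forall>l. l \<noteq> q \<longrightarrow> x l = y l) then P (x q) (y q) else 0)"

definition enc_state :: "(bool \<Rightarrow> nat qstate) \<Rightarrow> (bool \<Rightarrow> complex) \<Rightarrow> nat qstate" where
  "enc_state enc \<phi> = (\<lambda>x. \<phi> False * enc False x + \<phi> True * enc True x)"

definition codespace :: "nat \<Rightarrow> (bool \<Rightarrow> nat qstate) \<Rightarrow> nat qstate set" where
  "codespace r enc = {\<psi>. \<exists>\<phi>. \<forall>x\<in>basis {..<r}. \<psi> x = enc_state enc \<phi> x}"

text \<open>Decoding channel applied to the pure state psi (as density matrix), output 2x2 density matrix.\<close>
definition decode_pure ::
  "nat \<Rightarrow> 'c set \<Rightarrow> ('c \<Rightarrow> bool \<Rightarrow> nat bstate \<Rightarrow> complex) \<Rightarrow> nat qstate \<Rightarrow> bool \<Rightarrow> bool \<Rightarrow> complex" where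
  "decode_pure r T K \<psi> = (\<lambda>b b'. \<Sum>t\<in>T.
      (\<Sum>x\<in>basis {..<r}. K t b x * \<psi> x) * cnj (\<Sum>y\<in>basis {..<r}. K t b' y * \<psi> y))"

definition valid_code ::
  "nat \<Rightarrow> (bool \<Rightarrow> nat qstate) \<Rightarrow> 'c set \<Rightarrow> ('c \<Rightarrow> bool \<Rightarrow> nat bstate \<Rightarrow> complex) \<Rightarrow> bool" where
  "valid_code r enc T K \<longleftrightarrow>
     \<comment> \<open>codewords orthonormal\<close>
     (\<forall>b c. inner {..<r} (enc b) (enc c) = (if b = c then 1 else 0)) \<and>
     \<comment> \<open>decoding map is a quantum channel (trace preserving Kraus decomposition)\<close>
     finite T \<and>
     (\<forall>x\<in>basis {..<r}. \<forall>y\<in>basis {..<r}.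
        (\<Sum>t\<in>T. \<Sum>b\<in>UNIV. cnj (K t b x) * K t b y) = (if x = y then 1 else 0))"

definition corrects_single_paulis ::
  "nat \<Rightarrow> (bool \<Rightarrow> nat qstate) \<Rightarrow> 'c set \<Rightarrow> ('c \<Rightarrow> bool \<Rightarrow> nat bstate \<Rightarrow> complex) \<Rightarrow> bool" where
  "corrects_single_paulis r enc T K \<longleftrightarrow>
     (\<forall>q<r. \<forall>P<4. \<forall>\<phi>::bool \<Rightarrow> complex. (cmod (\<phi> False))\<^sup>2 + (cmod (\<phi> True))\<^sup>2 = 1 \<longrightarrow>
        decode_pure r T K (apply_op {..<r} (single_qubit_op q (pauli P)) (enc_state enc \<phi>))
          = (\<lambda>b b'. \<phi> b * cnj (\<phi> b')))"

text \<open>Reduced density matrix of psi on physical qubit q is I/2.\<close>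
definition single_marginals_mixed :: "nat \<Rightarrow> (bool \<Rightarrow> nat qstate) \<Rightarrow> bool" where
  "single_marginals_mixed r enc \<longleftrightarrow>
     (\<forall>\<psi>\<in>codespace r enc. nrm2 {..<r} \<psi> = 1 \<longrightarrow>
       (\<forall>q<r. \<forall>b c. (\<Sum>z\<in>basis ({..<r} - {q}). \<psi> (z(q := b)) * cnj (\<psi> (z(q := c))))
                     = (if b = c then 1/2 else 0)))"

text \<open>Qubits held by the provers: Sh p i is the slot of prover p holding (after the
prover's local unitary) its share of qubit i; Pv p t are private qubits of prover p.\<close>
datatype lab = Sh nat nat | Pv nat nat

definition prover_labels :: "nat \<Rightarrow> nat \<Rightarrow> nat \<Rightarrow> lab set" where
  "prover_labels n d p = {Sh p i | i. i < n} \<union> {Pv p t | t. t < d}"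

definition all_labels :: "nat \<Rightarrow> nat \<Rightarrow> nat \<Rightarrow> lab set" where
  "all_labels r n d = (\<Union>p<r. prover_labels n d p)"

definition share_labels :: "nat \<Rightarrow> nat set \<Rightarrow> lab set" where
  "share_labels r Q = {Sh p i | p i. p < r \<and> i \<in> Q}"

text \<open>The r shares of qubit i, as a basis state of the r physical qubits of the code.\<close>
definition shares_of :: "nat \<Rightarrow> nat \<Rightarrow> lab bstate \<Rightarrow> nat bstate" where
  "shares_of r i y = (\<lambda>p. if p < r then y (Sh p i) else False)"

text \<open>A strategy: number d of private qubits per prover, shared state psi of all provers,
and for every prover p and question Q (set of qubits whose shares are asked) a unitary
on prover p's qubits; the answer consists of the slots Sh p i, i in Q.\<close>
definition valid_strategy ::
  "nat \<Rightarrow> nat \<Rightarrow> nat \<Rightarrow> lab qstate \<Rightarrow> (nat \<Rightarrow> nat set \<Rightarrow> lab qop) \<Rightarrow> bool" where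
  "valid_strategy r n d \<psi> U \<longleftrightarrow>
     nrm2 (all_labels r n d) \<psi> = 1 \<and>
     (\<forall>p<r. \<forall>Q. unitary_on (prover_labels n d p) (U p Q))"

definition post_state ::
  "nat \<Rightarrow> nat \<Rightarrow> nat \<Rightarrow> lab qstate \<Rightarrow> (nat \<Rightarrow> nat set \<Rightarrow> lab qop) \<Rightarrow> (nat \<Rightarrow> nat set) \<Rightarrow> lab qstate" where
  "post_state r n d \<psi> U Qs =
     foldr (\<lambda>p \<phi>. apply_op (all_labels r n d) (lift (prover_labels n d p) (U p (Qs p))) \<phi>)
       [0..<r] \<psi>"

text \<open>Test 1 for term j: decode each qubit of S j and measure {H_j, I - H_j}; rejection
probability = probability of outcome H_j.\<close>
definition test1_reject ::
  "nat \<Rightarrow> nat \<Rightarrow> nat \<Rightarrow> 'c set \<Rightarrow> ('c \<Rightarrow> bool \<Rightarrow> nat bstate \<Rightarrow> complex)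
   \<Rightarrow> nat set \<Rightarrow> nat qop \<Rightarrow> lab qstate \<Rightarrow> real" where
  "test1_reject r n d T K Sj hj \<phi> =
     (\<Sum>tt\<in>Pi\<^sub>E Sj (\<lambda>_. T). \<Sum>z\<in>basis (all_labels r n d - share_labels r Sj).
        (let v = (\<lambda>x. \<Sum>y\<in>basis (share_labels r Sj).
                     (\<Prod>i\<in>Sj. K (tt i) (x i) (shares_of r i y)) * \<phi> (merge (share_labels r Sj) y z))
         in Re (inner Sj v (apply_op Sj hj v))))"

text \<open>Test 2 acceptance: probability that the r shares of qubit i lie in the codespace.\<close>
definition test2_accept ::
  "nat \<Rightarrow> nat \<Rightarrow> nat \<Rightarrow> (bool \<Rightarrow> nat qstate) \<Rightarrow> nat \<Rightarrow> lab qstate \<Rightarrow> real" where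
  "test2_accept r n d enc i \<phi> =
     (\<Sum>z\<in>basis (all_labels r n d - share_labels r {i}). \<Sum>b\<in>UNIV.
        (cmod (\<Sum>y\<in>basis (share_labels r {i}).
                 cnj (enc b (shares_of r i y)) * \<phi> (merge (share_labels r {i}) y z)))\<^sup>2)"

definition ksets :: "nat \<Rightarrow> nat \<Rightarrow> nat \<Rightarrow> nat set set" where
  "ksets n k i = {S. S \<subseteq> {..<n} \<and> card S = k \<and> i \<in> S}"

definition accept_prob ::
  "nat \<Rightarrow> nat \<Rightarrow> nat \<Rightarrow> (nat \<Rightarrow> nat set) \<Rightarrow> (nat \<Rightarrow> nat qop) \<Rightarrow>
   nat \<Rightarrow> (bool \<Rightarrow> nat qstate) \<Rightarrow> 'c set \<Rightarrow> ('c \<Rightarrow> bool \<Rightarrow> nat bstate \<Rightarrow> complex) \<Rightarrow>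
   nat \<Rightarrow> lab qstate \<Rightarrow> (nat \<Rightarrow> nat set \<Rightarrow> lab qop) \<Rightarrow> real" where
  "accept_prob n k m S h r enc T K d \<psi> U =
     (1/2) * ((1 / real m) * (\<Sum>j<m.
                1 - test1_reject r n d T K (S j) (h j) (post_state r n d \<psi> U (\<lambda>_. S j))))
   + (1/2) * ((1 / real n) * (\<Sum>i<n. (1 / real (card (ksets n k i))) * (\<Sum>Q\<in>ksets n k i.
          (1/2) * ((1 / real r) * (\<Sum>p0<r.
                     test2_accept r n d enc i
                       (post_state r n d \<psi> U (\<lambda>p. if p = p0 then Q else {i}))))
        + (1/2) * test2_accept r n d enc i (post_state r n d \<psi> U (\<lambda>_. {i})))))"

end

theory Submission
  imports Defs
begin

lemma finite_basis: "finite L \<Longrightarrow> finite (basis L)"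
proof -
  assume fL: "finite L"
  have "basis L \<subseteq> (\<lambda>A l. l \<in> A) ` Pow L"
  proof
    fix x assume "x \<in> basis L"
    hence "x = (\<lambda>l. l \<in> {l\<in>L. x l})" by (auto simp: basis_def)
    thus "x \<in> (\<lambda>A l. l \<in> A) ` Pow L" by blast
  qed
  thus ?thesis using fL by (meson finite_Pow_iff finite_imageI finite_subset)
qed

lemma merge_basis: "A \<subseteq> L \<Longrightarrow> y \<in> basis A \<Longrightarrow> z \<in> basis (L - A) \<Longrightarrow> merge A y z \<in> basis L"
  by (auto simp: basis_def merge_def)

lemma split_sum:
  assumes "A \<subseteq> L" "finite L"
  shows "(\<Sum>x\<in>basis L. g x) = (\<Sum>y\<in>basis A. \<Sum>z\<in>basis (L - A). g (merge A y z))"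
proof -
  have bij: "bij_betw (\<lambda>(y,z). merge A y z) (basis A \<times> basis (L - A)) (basis L)"
  proof (rule bij_betw_byWitness[where f'="\<lambda>x. (restr A x, restr (L - A) x)"])
    show "\<forall>a\<in>basis A \<times> basis (L - A). (restr A ((\<lambda>(y,z). merge A y z) a), restr (L - A) ((\<lambda>(y,z). merge A y z) a)) = a"
      by (auto simp: basis_def merge_def restr_def fun_eq_iff)
    show "\<forall>a'\<in>basis L. (\<lambda>(y,z). merge A y z) (restr A a', restr (L - A) a') = a'"
      by (auto simp: basis_def merge_def restr_def fun_eq_iff)
    show "(\<lambda>(y,z). merge A y z) ` (basis A \<times> basis (L - A)) \<subseteq> basis L"
      using assms by (auto simp: basis_def merge_def)
    show "(\<lambda>x. (restr A x, restr (L - A) x)) ` basis L \<subseteq> basis A \<times> basis (L - A)"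
      by (auto simp: basis_def restr_def)
  qed
  have "(\<Sum>x\<in>basis L. g x) = (\<Sum>p\<in>basis A \<times> basis (L - A). g ((\<lambda>(y,z). merge A y z) p))"
    using sum.reindex_bij_betw[OF bij, of g] by simp
  also have "\<dots> = (\<Sum>y\<in>basis A. \<Sum>z\<in>basis (L - A). g (merge A y z))"
    by (simp add: sum.cartesian_product split_def)
  finally show ?thesis .
qed

lemma finite_share: "finite Q \<Longrightarrow> finite (share_labels r Q)"
proof -
  assume "finite Q"
  have "share_labels r Q = (\<lambda>(p,i). Sh p i) ` ({..<r} \<times> Q)"
    by (auto simp: share_labels_def)
  thus ?thesis using \<open>finite Q\<close> by simp
qed

lemma sum_shares_prod:
  fixes f :: "nat \<Rightarrow> nat bstate \<Rightarrow> 'b::comm_semiring_1"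
  assumes "finite Q"
  shows "(\<Sum>y\<in>basis (share_labels r Q). \<Prod>i\<in>Q. f i (shares_of r i y)) = (\<Prod>i\<in>Q. \<Sum>w\<in>basis {..<r}. f i w)"
proof -
  have fb: "finite (basis {..<r::nat})" by (simp add: finite_basis)
  have bij: "bij_betw (\<lambda>y. restrict (\<lambda>i. shares_of r i y) Q) (basis (share_labels r Q)) (PiE Q (\<lambda>_. basis {..<r}))"
  proof (rule bij_betw_byWitness[where f'="\<lambda>g l. (case l of Sh p i \<Rightarrow> p < r \<and> i \<in> Q \<and> g i p | Pv _ _ \<Rightarrow> False)"])
    show "\<forall>a\<in>basis (share_labels r Q). (\<lambda>l. case l of Sh p i \<Rightarrow> p < r \<and> i \<in> Q \<and> restrict (\<lambda>i. shares_of r i a) Q i p | Pv _ _ \<Rightarrow> False) = a"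
    proof
      fix a assume a: "a \<in> basis (share_labels r Q)"
      show "(\<lambda>l. case l of Sh p i \<Rightarrow> p < r \<and> i \<in> Q \<and> restrict (\<lambda>i. shares_of r i a) Q i p | Pv _ _ \<Rightarrow> False) = a"
      proof
        fix l show "(case l of Sh p i \<Rightarrow> p < r \<and> i \<in> Q \<and> restrict (\<lambda>i. shares_of r i a) Q i p | Pv _ _ \<Rightarrow> False) = a l"
          using a by (cases l) (auto simp: basis_def share_labels_def shares_of_def)
      qed
    qed
    show "\<forall>a'\<in>PiE Q (\<lambda>_. basis {..<r}). restrict (\<lambda>i. shares_of r i (\<lambda>l. case l of Sh p i \<Rightarrow> p < r \<and> i \<in> Q \<and> a' i p | Pv _ _ \<Rightarrow> False)) Q = a'"
    proof
      fix g assume g: "g \<in> PiE Q (\<lambda>_. basis {..<r})"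
      show "restrict (\<lambda>i. shares_of r i (\<lambda>l. case l of Sh p i \<Rightarrow> p < r \<and> i \<in> Q \<and> g i p | Pv _ _ \<Rightarrow> False)) Q = g"
      proof
        fix i show "restrict (\<lambda>i. shares_of r i (\<lambda>l. case l of Sh p i \<Rightarrow> p < r \<and> i \<in> Q \<and> g i p | Pv _ _ \<Rightarrow> False)) Q i = g i"
          using g by (auto simp: shares_of_def PiE_def extensional_def basis_def fun_eq_iff)
      qed
    qed
    show "(\<lambda>y. restrict (\<lambda>i. shares_of r i y) Q) ` basis (share_labels r Q) \<subseteq> PiE Q (\<lambda>_. basis {..<r})"
      by (auto simp: basis_def shares_of_def)
    show "(\<lambda>g l. case l of Sh p i \<Rightarrow> p < r \<and> i \<in> Q \<and> g i p | Pv _ _ \<Rightarrow> False) ` PiE Q (\<lambda>_. basis {..<r}) \<subseteq> basis (share_labels r Q)"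
    proof
      fix y assume "y \<in> (\<lambda>g l. case l of Sh p i \<Rightarrow> p < r \<and> i \<in> Q \<and> g i p | Pv _ _ \<Rightarrow> False) ` PiE Q (\<lambda>_. basis {..<r})"
      then obtain g where y: "y = (\<lambda>l. case l of Sh p i \<Rightarrow> p < r \<and> i \<in> Q \<and> g i p | Pv _ _ \<Rightarrow> False)" by blast
      show "y \<in> basis (share_labels r Q)"
        unfolding basis_def share_labels_def
      proof (intro CollectI allI impI)
        fix l assume "l \<notin> {Sh p i |p i. p < r \<and> i \<in> Q}"
        thus "y l = False" unfolding y by (cases l) auto
      qed
    qed
  qed
  have "(\<Prod>i\<in>Q. \<Sum>w\<in>basis {..<r}. f i w) = (\<Sum>g\<in>PiE Q (\<lambda>_. basis {..<r}). \<Prod>i\<in>Q. f i (g i))"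
    using prod_sum_PiE[OF assms fb, of f] by simp
  also have "\<dots> = (\<Sum>y\<in>basis (share_labels r Q). \<Prod>i\<in>Q. f i (restrict (\<lambda>i. shares_of r i y) Q i))"
    using sum.reindex_bij_betw[OF bij, of "\<lambda>g. \<Prod>i\<in>Q. f i (g i)"] by simp
  also have "\<dots> = (\<Sum>y\<in>basis (share_labels r Q). \<Prod>i\<in>Q. f i (shares_of r i y))"
    by (intro sum.cong prod.cong) auto
  finally show ?thesis by simp
qed

definition Ep :: "nat \<Rightarrow> (bool \<Rightarrow> nat qstate) \<Rightarrow> nat set \<Rightarrow> nat bstate \<Rightarrow> lab bstate \<Rightarrow> complex" where
  "Ep r enc Q x y = (\<Prod>i\<in>Q. enc (x i) (shares_of r i y))"

definition psiS :: "nat \<Rightarrow> nat \<Rightarrow> (bool \<Rightarrow> nat qstate) \<Rightarrow> nat qstate \<Rightarrow> lab qstate" where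
  "psiS r n enc \<Gamma> = (\<lambda>y. if y \<in> basis (share_labels r {..<n})
       then (\<Sum>x\<in>basis {..<n}. \<Gamma> x * Ep r enc {..<n} x y) else 0)"

lemma all_labels0: "all_labels r n 0 = share_labels r {..<n}"
  by (auto simp: all_labels_def prover_labels_def share_labels_def)

lemma share_diff: "share_labels r A - share_labels r Q = share_labels r (A - Q)"
  by (auto simp: share_labels_def)

lemma share_mono: "Q \<subseteq> A \<Longrightarrow> share_labels r Q \<subseteq> share_labels r A"
  by (auto simp: share_labels_def)

lemma shares_merge_in: "i \<in> Q \<Longrightarrow> shares_of r i (merge (share_labels r Q) y z) = shares_of r i y"
  by (auto simp: shares_of_def merge_def share_labels_def fun_eq_iff)

lemma shares_merge_out: "i \<notin> Q \<Longrightarrow> shares_of r i (merge (share_labels r Q) y z) = shares_of r i z"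
  by (auto simp: shares_of_def merge_def share_labels_def fun_eq_iff)

lemma psiS_merge:
  assumes "Q \<subseteq> {..<n}" "y \<in> basis (share_labels r Q)" "z \<in> basis (share_labels r ({..<n} - Q))"
  shows "psiS r n enc \<Gamma> (merge (share_labels r Q) y z)
       = (\<Sum>x\<in>basis {..<n}. \<Gamma> x * (Ep r enc Q x y * Ep r enc ({..<n} - Q) x z))"
proof -
  have "merge (share_labels r Q) y z \<in> basis (share_labels r {..<n})"
    using merge_basis[of "share_labels r Q" "share_labels r {..<n}" y z] assms share_mono[OF assms(1)]
    by (simp add: share_diff)
  moreover have "Ep r enc {..<n} x (merge (share_labels r Q) y z) = Ep r enc Q x y * Ep r enc ({..<n} - Q) x z" for x
  proof -
    have "Ep r enc {..<n} x (merge (share_labels r Q) y z)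
        = (\<Prod>i\<in>{..<n} - Q. enc (x i) (shares_of r i (merge (share_labels r Q) y z))) *
          (\<Prod>i\<in>Q. enc (x i) (shares_of r i (merge (share_labels r Q) y z)))"
      unfolding Ep_def using assms(1) by (simp add: prod.subset_diff)
    also have "\<dots> = Ep r enc ({..<n} - Q) x z * Ep r enc Q x y"
      unfolding Ep_def by (simp add: shares_merge_in shares_merge_out)
    finally show ?thesis by simp
  qed
  ultimately show ?thesis by (simp add: psiS_def)
qed

lemma prod_indicator:
  "finite R \<Longrightarrow> (\<Prod>i\<in>R. (if P i then 1 else 0) :: 'b::comm_semiring_1) = (if \<forall>i\<in>R. P i then 1 else 0)"
  by (induction R rule: finite_induct) auto

lemma enc_orth:
  assumes "valid_code r enc T K"
  shows "(\<Sum>w\<in>basis {..<r}. enc b w * cnj (enc c w)) = (if b = c then 1 else 0)"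
proof -
  have "inner {..<r} (enc c) (enc b) = (if c = b then 1 else 0)"
    using assms by (simp add: valid_code_def)
  thus ?thesis by (auto simp: inner_def mult.commute)
qed

lemma z_sum:
  assumes "valid_code r enc T K" "finite R" "finite B"
  shows "(\<Sum>z\<in>basis (share_labels r R). (\<Sum>x\<in>B. c x * Ep r enc R x z) * cnj (\<Sum>x'\<in>B. c' x' * Ep r enc R x' z))
    = (\<Sum>x\<in>B. \<Sum>x'\<in>B. c x * cnj (c' x') * (if \<forall>i\<in>R. x i = x' i then 1 else 0))"
proof -
  have "(\<Sum>z\<in>basis (share_labels r R). (\<Sum>x\<in>B. c x * Ep r enc R x z) * cnj (\<Sum>x'\<in>B. c' x' * Ep r enc R x' z))
     = (\<Sum>z\<in>basis (share_labels r R). \<Sum>x\<in>B. \<Sum>x'\<in>B. c x * cnj (c' x') * (Ep r enc R x z * cnj (Ep r enc R x' z)))"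
    by (simp add: sum_product cnj_sum mult_ac)
  also have "\<dots> = (\<Sum>x\<in>B. \<Sum>x'\<in>B. \<Sum>z\<in>basis (share_labels r R). c x * cnj (c' x') * (Ep r enc R x z * cnj (Ep r enc R x' z)))"
    by (subst sum.swap, rule sum.cong, simp, subst sum.swap, simp)
  also have "\<dots> = (\<Sum>x\<in>B. \<Sum>x'\<in>B. c x * cnj (c' x') * (if \<forall>i\<in>R. x i = x' i then 1 else 0))"
  proof (intro sum.cong refl)
    fix x x'
    have "(\<Sum>z\<in>basis (share_labels r R). Ep r enc R x z * cnj (Ep r enc R x' z))
        = (\<Sum>z\<in>basis (share_labels r R). \<Prod>i\<in>R. enc (x i) (shares_of r i z) * cnj (enc (x' i) (shares_of r i z)))"
      by (simp add: Ep_def prod.distrib cnj_prod)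
    also have "\<dots> = (\<Prod>i\<in>R. \<Sum>w\<in>basis {..<r}. enc (x i) w * cnj (enc (x' i) w))"
      by (rule sum_shares_prod[OF assms(2)])
    also have "\<dots> = (\<Prod>i\<in>R. if x i = x' i then 1 else 0)"
      by (simp add: enc_orth[OF assms(1)])
    also have "\<dots> = (if \<forall>i\<in>R. x i = x' i then 1 else 0)"
      by (rule prod_indicator[OF assms(2)])
    finally show "(\<Sum>z\<in>basis (share_labels r R). c x * cnj (c' x') * (Ep r enc R x z * cnj (Ep r enc R x' z)))
       = c x * cnj (c' x') * (if \<forall>i\<in>R. x i = x' i then 1 else 0)"
      by (simp add: sum_distrib_left[symmetric])
  qed
  finally show ?thesis .
qed

lemma cns: "(complex_of_real (cmod z))\<^sup>2 = z * cnj z"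
  by (metis complex_norm_square of_real_power)

lemma collapse:
  "finite B \<Longrightarrow> (\<Sum>x\<in>B. \<Sum>x'\<in>B. f x x' * (if x = x' then 1 else 0)) = (\<Sum>x\<in>B. (f x x :: 'b::comm_semiring_1))"
proof (rule sum.cong[OF refl])
  fix x assume "x \<in> B" "finite B"
  have "(\<Sum>x'\<in>B. f x x' * (if x = x' then 1 else 0)) = (\<Sum>x'\<in>B. if x = x' then f x x' else 0)"
    by (rule sum.cong) auto
  also have "\<dots> = f x x" using \<open>x \<in> B\<close> \<open>finite B\<close> by (simp add: sum.delta)
  finally show "(\<Sum>x'\<in>B. f x x' * (if x = x' then 1 else 0)) = f x x" .
qed

lemma basis_agree: "x \<in> basis L \<Longrightarrow> x' \<in> basis L \<Longrightarrow> (\<forall>i\<in>L. x i = x' i) \<longleftrightarrow> x = x'"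
  by (auto simp: basis_def fun_eq_iff)

lemma nrm2_complex: "complex_of_real (nrm2 L \<psi>) = (\<Sum>x\<in>basis L. \<psi> x * cnj (\<psi> x))"
  by (simp add: nrm2_def cns)

lemma psiS_norm:
  assumes vc: "valid_code r enc T K" and nG: "nrm2 {..<n} \<Gamma> = 1"
  shows "nrm2 (share_labels r {..<n}) (psiS r n enc \<Gamma>) = 1"
proof -
  let ?B = "basis {..<n::nat}"
  have fB: "finite ?B" by (simp add: finite_basis)
  have "complex_of_real (nrm2 (share_labels r {..<n}) (psiS r n enc \<Gamma>))
      = (\<Sum>y\<in>basis (share_labels r {..<n}). (\<Sum>x\<in>?B. \<Gamma> x * Ep r enc {..<n} x y) * cnj (\<Sum>x'\<in>?B. \<Gamma> x' * Ep r enc {..<n} x' y))"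
    by (simp add: nrm2_complex psiS_def)
  also have "\<dots> = (\<Sum>x\<in>?B. \<Sum>x'\<in>?B. \<Gamma> x * cnj (\<Gamma> x') * (if \<forall>i\<in>{..<n}. x i = x' i then 1 else 0))"
    by (rule z_sum[OF vc finite_lessThan fB])
  also have "\<dots> = (\<Sum>x\<in>?B. \<Sum>x'\<in>?B. \<Gamma> x * cnj (\<Gamma> x') * (if x = x' then 1 else 0))"
    by (intro sum.cong refl) (simp add: basis_agree)
  also have "\<dots> = (\<Sum>x\<in>?B. \<Gamma> x * cnj (\<Gamma> x))" by (rule collapse[OF fB])
  also have "\<dots> = complex_of_real (nrm2 {..<n} \<Gamma>)" by (simp add: nrm2_complex)
  finally show ?thesis using nG by simp
qed

lemma test2_one:
  assumes vc: "valid_code r enc T K" and nG: "nrm2 {..<n} \<Gamma> = 1" and i: "i < n"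
  shows "test2_accept r n 0 enc i (psiS r n enc \<Gamma>) = 1"
proof -
  let ?B = "basis {..<n::nat}"
  let ?R = "{..<n} - {i}"
  have fB: "finite ?B" by (simp add: finite_basis)
  have Lrest: "all_labels r n 0 - share_labels r {i} = share_labels r ?R"
    by (simp add: all_labels0 share_diff)
  have inner: "(\<Sum>y\<in>basis (share_labels r {i}). cnj (enc b (shares_of r i y)) * psiS r n enc \<Gamma> (merge (share_labels r {i}) y z))
     = (\<Sum>x\<in>?B. (\<Gamma> x * (if x i = b then 1 else 0)) * Ep r enc ?R x z)"
    if z: "z \<in> basis (share_labels r ?R)" for b z
  proof -
    have "(\<Sum>y\<in>basis (share_labels r {i}). cnj (enc b (shares_of r i y)) * psiS r n enc \<Gamma> (merge (share_labels r {i}) y z))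
      = (\<Sum>y\<in>basis (share_labels r {i}). \<Sum>x\<in>?B. (\<Gamma> x * Ep r enc ?R x z) * (enc (x i) (shares_of r i y) * cnj (enc b (shares_of r i y))))"
      using z i by (intro sum.cong refl) (simp add: psiS_merge sum_distrib_left Ep_def mult_ac)
    also have "\<dots> = (\<Sum>x\<in>?B. (\<Gamma> x * Ep r enc ?R x z) * (\<Sum>y\<in>basis (share_labels r {i}). enc (x i) (shares_of r i y) * cnj (enc b (shares_of r i y))))"
      by (subst sum.swap) (simp add: sum_distrib_left)
    also have "\<dots> = (\<Sum>x\<in>?B. (\<Gamma> x * Ep r enc ?R x z) * (if x i = b then 1 else 0))"
    proof (intro sum.cong refl)
      fix x
      have "(\<Sum>y\<in>basis (share_labels r {i}). enc (x i) (shares_of r i y) * cnj (enc b (shares_of r i y)))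
          = (\<Sum>y\<in>basis (share_labels r {i}). \<Prod>i'\<in>{i}. enc (x i) (shares_of r i' y) * cnj (enc b (shares_of r i' y)))"
        by simp
      also have "\<dots> = (\<Prod>i'\<in>{i}. \<Sum>w\<in>basis {..<r}. enc (x i) w * cnj (enc b w))"
        by (rule sum_shares_prod) simp
      also have "\<dots> = (if x i = b then 1 else 0)" by (simp add: enc_orth[OF vc])
      finally show "\<Gamma> x * Ep r enc ?R x z * (\<Sum>y\<in>basis (share_labels r {i}). enc (x i) (shares_of r i y) * cnj (enc b (shares_of r i y)))
          = \<Gamma> x * Ep r enc ?R x z * (if x i = b then 1 else 0)" by simp
    qed
    finally show ?thesis by (simp add: mult_ac)
  qed
  have "complex_of_real (test2_accept r n 0 enc i (psiS r n enc \<Gamma>))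
     = (\<Sum>z\<in>basis (share_labels r ?R). \<Sum>b\<in>UNIV.
          (\<Sum>x\<in>?B. (\<Gamma> x * (if x i = b then 1 else 0)) * Ep r enc ?R x z) *
          cnj (\<Sum>x\<in>?B. (\<Gamma> x * (if x i = b then 1 else 0)) * Ep r enc ?R x z))"
    unfolding test2_accept_def Lrest
    by (simp add: cns inner)
  also have "\<dots> = (\<Sum>b\<in>UNIV. \<Sum>z\<in>basis (share_labels r ?R).
          (\<Sum>x\<in>?B. (\<Gamma> x * (if x i = b then 1 else 0)) * Ep r enc ?R x z) *
          cnj (\<Sum>x\<in>?B. (\<Gamma> x * (if x i = b then 1 else 0)) * Ep r enc ?R x z))"
    by (rule sum.swap)
  also have "\<dots> = (\<Sum>b\<in>UNIV. \<Sum>x\<in>?B. \<Sum>x'\<in>?B. (\<Gamma> x * (if x i = b then 1 else 0)) * cnj (\<Gamma> x' * (if x' i = b then 1 else 0))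
          * (if \<forall>j\<in>?R. x j = x' j then 1 else 0))"
    by (intro sum.cong refl z_sum[OF vc] fB) simp
  also have "\<dots> = (\<Sum>b\<in>UNIV. \<Sum>x\<in>?B. \<Sum>x'\<in>?B. (\<Gamma> x * cnj (\<Gamma> x') * (if x i = b then 1 else 0)) * (if x = x' then 1 else 0))"
  proof (intro sum.cong refl)
    fix b x x' assume x: "x \<in> ?B" and x': "x' \<in> ?B"
    have "(x i = b \<and> x' i = b \<and> (\<forall>j\<in>?R. x j = x' j)) \<longleftrightarrow> (x i = b \<and> x = x')"
    proof
      assume h: "x i = b \<and> x' i = b \<and> (\<forall>j\<in>?R. x j = x' j)"
      hence "\<forall>j\<in>{..<n}. x j = x' j" by auto
      thus "x i = b \<and> x = x'" using h basis_agree[OF x x'] by blast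
    qed auto
    thus "\<Gamma> x * (if x i = b then 1 else 0) * cnj (\<Gamma> x' * (if x' i = b then 1 else 0)) * (if \<forall>j\<in>?R. x j = x' j then 1 else 0)
        = \<Gamma> x * cnj (\<Gamma> x') * (if x i = b then 1 else 0) * (if x = x' then 1 else 0)"
      by (auto split: if_splits)
  qed
  also have "\<dots> = (\<Sum>b\<in>UNIV. \<Sum>x\<in>?B. \<Gamma> x * cnj (\<Gamma> x) * (if x i = b then 1 else 0))"
    by (subst collapse[OF fB]) simp
  also have "\<dots> = (\<Sum>x\<in>?B. \<Sum>b\<in>UNIV. \<Gamma> x * cnj (\<Gamma> x) * (if x i = b then 1 else 0))"
    by (rule sum.swap)
  also have "\<dots> = (\<Sum>x\<in>?B. \<Gamma> x * cnj (\<Gamma> x))"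
    by (intro sum.cong refl) (simp add: UNIV_bool)
  also have "\<dots> = 1" using nG by (simp add: nrm2_complex[symmetric])
  finally show ?thesis by (simp add: of_real_eq_1_iff)
qed

definition Mk :: "nat \<Rightarrow> (bool \<Rightarrow> nat qstate) \<Rightarrow> ('c \<Rightarrow> bool \<Rightarrow> nat bstate \<Rightarrow> complex) \<Rightarrow> 'c \<Rightarrow> bool \<Rightarrow> bool \<Rightarrow> complex" where
  "Mk r enc K t b c = (\<Sum>w\<in>basis {..<r}. K t b w * enc c w)"

lemma solve2:
  fixes a d x y p q :: complex
  assumes "a + x + y + d = p" "a - \<i> * x + \<i> * y + d = q"
  shows "x = ((p - a - d) + \<i> * (q - a - d)) / 2" "y = (p - a - d) - ((p - a - d) + \<i> * (q - a - d)) / 2"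
proof -
  have "q - a - d = -\<i>*x + \<i>*y" using assms(2)[symmetric] by (simp add: algebra_simps)
  hence "\<i> * (q - a - d) = \<i> * (-\<i>*x + \<i>*y)" by simp
  hence "\<i> * (q - a - d) = x - y" by (simp add: algebra_simps)
  moreover have "p - a - d = x + y" using assms(1)[symmetric] by (simp add: algebra_simps)
  ultimately show "x = ((p - a - d) + \<i> * (q - a - d)) / 2" "y = (p - a - d) - ((p - a - d) + \<i> * (q - a - d)) / 2"
    by (simp_all add: field_simps)
qed

lemma lin4:
  fixes s A B C D v :: complex
  assumes "s * s = 1/2" "s * s * A + s * (- \<i> * s) * B + \<i> * s * s * C + \<i> * s * (- \<i> * s) * D = v"
  shows "A - \<i> * B + \<i> * C + D = 2 * v"
proof -
  have "s * s * A + s * (- \<i> * s) * B + \<i> * s * s * C + \<i> * s * (- \<i> * s) * D = (s * s) * (A - \<i> * B + \<i> * C + D)"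
    by (simp add: algebra_simps)
  hence "v = (s * s) * (A - \<i> * B + \<i> * C + D)" using assms(2) by simp
  hence "v = (1/2) * (A - \<i> * B + \<i> * C + D)" using assms(1) by simp
  thus ?thesis by (simp add: mult.commute)
qed

lemma single_id: "single_qubit_op q (pauli 0) x y = (if x = y then 1 else 0)"
  by (auto simp: single_qubit_op_def pauli_def fun_eq_iff)

lemma kraus_rel:
  assumes vc: "valid_code r enc T K" and cs: "corrects_single_paulis r enc T K" and r: "0 < r"
  shows "(\<Sum>t\<in>T. Mk r enc K t b c * cnj (Mk r enc K t b' c')) = (if b = c \<and> b' = c' then 1 else 0)"
proof -
  let ?M = "Mk r enc K"
  define D where "D c c' = (\<Sum>t\<in>T. ?M t b c * cnj (?M t b' c'))" for c c'
  have fb: "finite (basis {..<r})" by (simp add: finite_basis)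
  have key: "\<phi> False * cnj (\<phi> False) * D False False + \<phi> False * cnj (\<phi> True) * D False True
     + \<phi> True * cnj (\<phi> False) * D True False + \<phi> True * cnj (\<phi> True) * D True True = \<phi> b * cnj (\<phi> b')"
    if nrm: "(cmod (\<phi> False))\<^sup>2 + (cmod (\<phi> True))\<^sup>2 = 1" for \<phi>
  proof -
    have c1: "decode_pure r T K (apply_op {..<r} (single_qubit_op 0 (pauli 0)) (enc_state enc \<phi>)) = (\<lambda>b b'. \<phi> b * cnj (\<phi> b'))"
      using cs r nrm unfolding corrects_single_paulis_def by auto
    have c2: "decode_pure r T K (apply_op {..<r} (single_qubit_op 0 (pauli 0)) (enc_state enc \<phi>))
        = decode_pure r T K (enc_state enc \<phi>)"
    proof -
      have "apply_op {..<r} (single_qubit_op 0 (pauli 0)) (enc_state enc \<phi>) x = enc_state enc \<phi> x"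
        if "x \<in> basis {..<r}" for x
      proof -
        have "apply_op {..<r} (single_qubit_op 0 (pauli 0)) (enc_state enc \<phi>) x
          = (\<Sum>y\<in>basis {..<r}. if x = y then enc_state enc \<phi> y else 0)"
          unfolding apply_op_def single_id by (intro sum.cong) auto
        thus ?thesis using that fb by (simp add: sum.delta)
      qed
      thus ?thesis unfolding decode_pure_def by (intro ext sum.cong refl) auto
    qed
    have c3: "(\<Sum>x\<in>basis {..<r}. K t bb x * enc_state enc \<phi> x) = \<phi> False * ?M t bb False + \<phi> True * ?M t bb True" for t bb
      by (simp add: enc_state_def Mk_def sum_distrib_left sum.distrib algebra_simps)
    have "decode_pure r T K (enc_state enc \<phi>) b b' = \<phi> b * cnj (\<phi> b')" using c1 c2 by simp
    hence "(\<Sum>t\<in>T. (\<phi> False * ?M t b False + \<phi> True * ?M t b True) * cnj (\<phi> False * ?M t b' False + \<phi> True * ?M t b' True))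
        = \<phi> b * cnj (\<phi> b')"
      unfolding decode_pure_def by (simp only: c3)
    moreover have "(\<Sum>t\<in>T. (\<phi> False * ?M t b False + \<phi> True * ?M t b True) * cnj (\<phi> False * ?M t b' False + \<phi> True * ?M t b' True))
      = \<phi> False * cnj (\<phi> False) * D False False + \<phi> False * cnj (\<phi> True) * D False True
     + \<phi> True * cnj (\<phi> False) * D True False + \<phi> True * cnj (\<phi> True) * D True True"
      unfolding D_def by (simp add: sum.distrib sum_distrib_left algebra_simps)
    ultimately show ?thesis by simp
  qed
  define s where "s = complex_of_real (sqrt (1/2))"
  have ss: "s * s = 1/2" unfolding s_def by (simp flip: of_real_mult)
  have cs': "cnj s = s" unfolding s_def by simp
  have ms: "(cmod s)\<^sup>2 = 1/2" unfolding s_def by (simp add: norm_of_real)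
  have e1: "D False False = (if b = False \<and> b' = False then 1 else 0)"
    using key[of "\<lambda>c. if c then 0 else 1"] by auto
  have e2: "D True True = (if b = True \<and> b' = True then 1 else 0)"
    using key[of "\<lambda>c. if c then 1 else 0"] by auto
  have e3: "D False False + D False True + D True False + D True True = 1"
  proof -
    have "s * s * D False False + s * s * D False True + s * s * D True False + s * s * D True True = s * s"
      using key[of "\<lambda>c. s"] ms cs' by simp
    thus ?thesis using ss by (simp add: algebra_simps)
  qed
  have e4: "D False False - \<i> * D False True + \<i> * D True False + D True True
      = 2 * ((if b then \<i> * s else s) * cnj (if b' then \<i> * s else s))"
  proof -
    have "s * s * D False False + s * (- \<i> * s) * D False True + \<i> * s * s * D True False + \<i> * s * (- \<i> * s) * D True True
      = (if b then \<i> * s else s) * cnj (if b' then \<i> * s else s)"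
      using key[of "\<lambda>c. if c then \<i> * s else s"] ms cs' by (simp add: norm_mult)
    thus ?thesis by (rule lin4[OF ss])
  qed
  note sol = solve2[OF e3 e4]
  show ?thesis
  proof -
    have v: "2 * ((if b then \<i> * s else s) * cnj (if b' then \<i> * s else s)) = (if b = b' then 1 else if b then \<i> else - \<i>)"
      using ss cs' by (cases b; cases b') (simp_all add: algebra_simps)
    show ?thesis
      using sol e1 e2 unfolding D_def[symmetric] v
      by (cases b; cases b'; cases c; cases c') simp_all
  qed
qed

lemma swap4: "(\<Sum>a\<in>A. \<Sum>b\<in>B. \<Sum>c\<in>C. \<Sum>d\<in>D. f a b c d) = (\<Sum>c\<in>C. \<Sum>d\<in>D. \<Sum>a\<in>A. \<Sum>b\<in>B. (f a b c d :: 'z::comm_monoid_add))"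
proof -
  have "(\<Sum>a\<in>A. \<Sum>b\<in>B. \<Sum>c\<in>C. \<Sum>d\<in>D. f a b c d) = (\<Sum>a\<in>A. \<Sum>c\<in>C. \<Sum>b\<in>B. \<Sum>d\<in>D. f a b c d)"
    by (intro sum.cong refl) (rule sum.swap)
  also have "\<dots> = (\<Sum>a\<in>A. \<Sum>c\<in>C. \<Sum>d\<in>D. \<Sum>b\<in>B. f a b c d)"
    by (intro sum.cong refl) (rule sum.swap)
  also have "\<dots> = (\<Sum>c\<in>C. \<Sum>a\<in>A. \<Sum>d\<in>D. \<Sum>b\<in>B. f a b c d)"
    by (rule sum.swap)
  also have "\<dots> = (\<Sum>c\<in>C. \<Sum>d\<in>D. \<Sum>a\<in>A. \<Sum>b\<in>B. f a b c d)"
    by (intro sum.cong refl) (rule sum.swap)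
  finally show ?thesis .
qed

lemma swap3: "(\<Sum>a\<in>A. \<Sum>c\<in>C. \<Sum>d\<in>D. f a c d) = (\<Sum>c\<in>C. \<Sum>d\<in>D. \<Sum>a\<in>A. (f a c d :: 'z::comm_monoid_add))"
proof -
  have "(\<Sum>a\<in>A. \<Sum>c\<in>C. \<Sum>d\<in>D. f a c d) = (\<Sum>c\<in>C. \<Sum>a\<in>A. \<Sum>d\<in>D. f a c d)"
    by (rule sum.swap)
  also have "\<dots> = (\<Sum>c\<in>C. \<Sum>d\<in>D. \<Sum>a\<in>A. f a c d)"
    by (intro sum.cong refl) (rule sum.swap)
  finally show ?thesis .
qed

lemma test1_val:
  assumes vc: "valid_code r enc T K" and cs: "corrects_single_paulis r enc T K" and r: "0 < r"
    and Q: "Q \<subseteq> {..<n}"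
  shows "test1_reject r n 0 T K Q hj (psiS r n enc \<Gamma>) = Re (inner {..<n} \<Gamma> (apply_op {..<n} (lift Q hj) \<Gamma>))"
proof -
  let ?B = "basis {..<n::nat}"
  let ?BQ = "basis Q"
  let ?R = "{..<n} - Q"
  let ?Z = "basis (share_labels r ?R)"
  let ?P = "Pi\<^sub>E Q (\<lambda>_. T)"
  let ?M = "Mk r enc K"
  have fT: "finite T" using vc by (simp add: valid_code_def)
  have fQ: "finite Q" using Q finite_subset by blast
  have fB: "finite ?B" by (simp add: finite_basis)
  have fBQ: "finite ?BQ" using fQ by (simp add: finite_basis)
  have fP: "finite ?P" using fQ fT by (simp add: finite_PiE)
  define G where "G tt x x' = (\<Prod>i\<in>Q. ?M (tt i) (x i) (x' i))" for tt and x x' :: "nat bstate"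
  define v where "v tt z x = (\<Sum>y\<in>basis (share_labels r Q). (\<Prod>i\<in>Q. K (tt i) (x i) (shares_of r i y)) * psiS r n enc \<Gamma> (merge (share_labels r Q) y z))"
    for tt z and x :: "nat bstate"
  have Lrest: "all_labels r n 0 - share_labels r Q = share_labels r ?R"
    by (simp add: all_labels0 share_diff)
  have vform: "v tt z x = (\<Sum>x'\<in>?B. (\<Gamma> x' * G tt x x') * Ep r enc ?R x' z)" if z: "z \<in> ?Z" for tt z x
  proof -
    have "v tt z x = (\<Sum>y\<in>basis (share_labels r Q). \<Sum>x'\<in>?B. (\<Gamma> x' * Ep r enc ?R x' z) * (\<Prod>i\<in>Q. K (tt i) (x i) (shares_of r i y) * enc (x' i) (shares_of r i y)))"
      unfolding v_def using z Q
      by (intro sum.cong refl) (simp add: psiS_merge sum_distrib_left Ep_def prod.distrib mult_ac)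
    also have "\<dots> = (\<Sum>x'\<in>?B. (\<Gamma> x' * Ep r enc ?R x' z) * (\<Sum>y\<in>basis (share_labels r Q). \<Prod>i\<in>Q. K (tt i) (x i) (shares_of r i y) * enc (x' i) (shares_of r i y)))"
      by (subst sum.swap) (simp add: sum_distrib_left)
    also have "\<dots> = (\<Sum>x'\<in>?B. (\<Gamma> x' * Ep r enc ?R x' z) * G tt x x')"
    proof (intro sum.cong refl)
      fix x'
      show "(\<Gamma> x' * Ep r enc ?R x' z) * (\<Sum>y\<in>basis (share_labels r Q). \<Prod>i\<in>Q. K (tt i) (x i) (shares_of r i y) * enc (x' i) (shares_of r i y))
          = (\<Gamma> x' * Ep r enc ?R x' z) * G tt x x'"
        using sum_shares_prod[OF fQ, of "\<lambda>i w. K (tt i) (x i) w * enc (x' i) w" r]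
        by (simp add: G_def Mk_def)
    qed
    finally show ?thesis by (simp add: mult_ac)
  qed
  have tsum: "(\<Sum>tt\<in>?P. G tt w x'' * cnj (G tt x x')) = (if \<forall>i\<in>Q. w i = x'' i \<and> x i = x' i then 1 else 0)"
    for w x x'' x' :: "nat bstate"
  proof -
    have "(\<Sum>tt\<in>?P. G tt w x'' * cnj (G tt x x')) = (\<Sum>tt\<in>?P. \<Prod>i\<in>Q. ?M (tt i) (w i) (x'' i) * cnj (?M (tt i) (x i) (x' i)))"
      by (simp add: G_def cnj_prod prod.distrib)
    also have "\<dots> = (\<Prod>i\<in>Q. \<Sum>t\<in>T. ?M t (w i) (x'' i) * cnj (?M t (x i) (x' i)))"
      by (rule prod_sum_PiE[OF fQ fT, symmetric])
    also have "\<dots> = (\<Prod>i\<in>Q. if w i = x'' i \<and> x i = x' i then 1 else 0)"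
      by (simp add: kraus_rel[OF vc cs r])
    also have "\<dots> = (if \<forall>i\<in>Q. w i = x'' i \<and> x i = x' i then 1 else 0)"
      by (rule prod_indicator[OF fQ])
    finally show ?thesis .
  qed
  have W: "(\<Sum>tt\<in>?P. \<Sum>z\<in>?Z. v tt z w * cnj (v tt z x))
     = (\<Sum>x''\<in>?B. \<Sum>x'\<in>?B. \<Gamma> x'' * cnj (\<Gamma> x') * (if \<forall>i\<in>?R. x'' i = x' i then 1 else 0)
          * (if \<forall>i\<in>Q. w i = x'' i \<and> x i = x' i then 1 else 0))" for w x
  proof -
    have "(\<Sum>tt\<in>?P. \<Sum>z\<in>?Z. v tt z w * cnj (v tt z x))
       = (\<Sum>tt\<in>?P. \<Sum>x''\<in>?B. \<Sum>x'\<in>?B. (\<Gamma> x'' * cnj (\<Gamma> x') * (if \<forall>i\<in>?R. x'' i = x' i then 1 else 0))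
            * (G tt w x'' * cnj (G tt x x')))"
    proof (rule sum.cong[OF refl])
      fix tt
      have "(\<Sum>z\<in>?Z. v tt z w * cnj (v tt z x))
          = (\<Sum>z\<in>?Z. (\<Sum>x''\<in>?B. (\<Gamma> x'' * G tt w x'') * Ep r enc ?R x'' z) * cnj (\<Sum>x'\<in>?B. (\<Gamma> x' * G tt x x') * Ep r enc ?R x' z))"
        by (intro sum.cong refl) (simp add: vform)
      also have "\<dots> = (\<Sum>x''\<in>?B. \<Sum>x'\<in>?B. (\<Gamma> x'' * G tt w x'') * cnj (\<Gamma> x' * G tt x x') * (if \<forall>i\<in>?R. x'' i = x' i then 1 else 0))"
        by (rule z_sum[OF vc _ fB]) simp
      also have "\<dots> = (\<Sum>x''\<in>?B. \<Sum>x'\<in>?B. (\<Gamma> x'' * cnj (\<Gamma> x') * (if \<forall>i\<in>?R. x'' i = x' i then 1 else 0))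
            * (G tt w x'' * cnj (G tt x x')))"
        by (intro sum.cong refl) (simp add: mult_ac)
      finally show "(\<Sum>z\<in>?Z. v tt z w * cnj (v tt z x)) = \<dots>" .
    qed
    also have "\<dots> = (\<Sum>x''\<in>?B. \<Sum>x'\<in>?B. \<Sum>tt\<in>?P. (\<Gamma> x'' * cnj (\<Gamma> x') * (if \<forall>i\<in>?R. x'' i = x' i then 1 else 0))
            * (G tt w x'' * cnj (G tt x x')))"
      by (rule swap3)
    also have "\<dots> = (\<Sum>x''\<in>?B. \<Sum>x'\<in>?B. \<Gamma> x'' * cnj (\<Gamma> x') * (if \<forall>i\<in>?R. x'' i = x' i then 1 else 0)
          * (if \<forall>i\<in>Q. w i = x'' i \<and> x i = x' i then 1 else 0))"
      by (intro sum.cong refl) (simp add: sum_distrib_left[symmetric] tsum)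
    finally show ?thesis .
  qed
  have "test1_reject r n 0 T K Q hj (psiS r n enc \<Gamma>) = Re (\<Sum>tt\<in>?P. \<Sum>z\<in>?Z. inner Q (v tt z) (apply_op Q hj (v tt z)))"
    unfolding test1_reject_def Lrest Let_def v_def by (simp add: Re_sum)
  also have "(\<Sum>tt\<in>?P. \<Sum>z\<in>?Z. inner Q (v tt z) (apply_op Q hj (v tt z)))
      = (\<Sum>tt\<in>?P. \<Sum>z\<in>?Z. \<Sum>x\<in>?BQ. \<Sum>w\<in>?BQ. hj x w * (v tt z w * cnj (v tt z x)))"
    by (simp add: inner_def apply_op_def sum_distrib_left mult_ac)
  also have "\<dots> = (\<Sum>x\<in>?BQ. \<Sum>w\<in>?BQ. \<Sum>tt\<in>?P. \<Sum>z\<in>?Z. hj x w * (v tt z w * cnj (v tt z x)))"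
    by (rule swap4)
  also have "\<dots> = (\<Sum>x\<in>?BQ. \<Sum>w\<in>?BQ. \<Sum>x''\<in>?B. \<Sum>x'\<in>?B. hj x w * (\<Gamma> x'' * cnj (\<Gamma> x') * (if \<forall>i\<in>?R. x'' i = x' i then 1 else 0)
          * (if \<forall>i\<in>Q. w i = x'' i \<and> x i = x' i then 1 else 0)))"
    by (intro sum.cong refl) (simp add: sum_distrib_left[symmetric] W)
  also have "\<dots> = (\<Sum>x''\<in>?B. \<Sum>x'\<in>?B. \<Sum>x\<in>?BQ. \<Sum>w\<in>?BQ. hj x w * (\<Gamma> x'' * cnj (\<Gamma> x') * (if \<forall>i\<in>?R. x'' i = x' i then 1 else 0)
          * (if \<forall>i\<in>Q. w i = x'' i \<and> x i = x' i then 1 else 0)))"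
    by (rule swap4)
  also have "\<dots> = (\<Sum>x''\<in>?B. \<Sum>x'\<in>?B. cnj (\<Gamma> x') * (lift Q hj x' x'' * \<Gamma> x''))"
  proof (intro sum.cong refl)
    fix x'' x' assume x'': "x'' \<in> ?B" and x': "x' \<in> ?B"
    let ?C = "\<Gamma> x'' * cnj (\<Gamma> x') * (if \<forall>i\<in>?R. x'' i = x' i then 1 else 0)"
    have rb: "restr Q u \<in> ?BQ" for u by (simp add: basis_def restr_def)
    have eqv: "(\<forall>i\<in>Q. w i = x'' i \<and> x i = x' i) \<longleftrightarrow> (x = restr Q x' \<and> w = restr Q x'')"
      if "x \<in> ?BQ" "w \<in> ?BQ" for x w
      using that by (auto simp: basis_def restr_def fun_eq_iff)
    have "(\<Sum>x\<in>?BQ. \<Sum>w\<in>?BQ. hj x w * (?C * (if \<forall>i\<in>Q. w i = x'' i \<and> x i = x' i then 1 else 0)))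
        = (\<Sum>x\<in>?BQ. if x = restr Q x' then (\<Sum>w\<in>?BQ. if w = restr Q x'' then hj x w * ?C else 0) else 0)"
    proof (rule sum.cong[OF refl])
      fix x assume x: "x \<in> ?BQ"
      show "(\<Sum>w\<in>?BQ. hj x w * (?C * (if \<forall>i\<in>Q. w i = x'' i \<and> x i = x' i then 1 else 0)))
         = (if x = restr Q x' then (\<Sum>w\<in>?BQ. if w = restr Q x'' then hj x w * ?C else 0) else 0)"
      proof (cases "x = restr Q x'")
        case True
        have "(\<Sum>w\<in>?BQ. hj x w * (?C * (if \<forall>i\<in>Q. w i = x'' i \<and> x i = x' i then 1 else 0)))
           = (\<Sum>w\<in>?BQ. if w = restr Q x'' then hj x w * ?C else 0)"
        proof (rule sum.cong[OF refl])
          fix w assume w: "w \<in> ?BQ"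
          show "hj x w * (?C * (if \<forall>i\<in>Q. w i = x'' i \<and> x i = x' i then 1 else 0))
             = (if w = restr Q x'' then hj x w * ?C else 0)"
            using eqv[OF x w] True by simp
        qed
        with True show ?thesis by simp
      next
        case False
        have "hj x w * (?C * (if \<forall>i\<in>Q. w i = x'' i \<and> x i = x' i then 1 else 0)) = 0" if w: "w \<in> ?BQ" for w
        proof -
          have nP: "\<not> (\<forall>i\<in>Q. w i = x'' i \<and> x i = x' i)" using eqv[OF x w] False by blast
          show ?thesis by (simp only: if_not_P[OF nP] mult_zero_right)
        qed
        hence s0: "(\<Sum>w\<in>?BQ. hj x w * (?C * (if \<forall>i\<in>Q. w i = x'' i \<and> x i = x' i then 1 else 0))) = 0"
          by (intro sum.neutral) blast
        show ?thesis by (subst if_not_P[OF False]) (rule s0)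
      qed
    qed
    also have "\<dots> = hj (restr Q x') (restr Q x'') * ?C"
      using fBQ rb by (simp add: sum.delta')
    also have "\<dots> = cnj (\<Gamma> x') * (lift Q hj x' x'' * \<Gamma> x'')"
    proof -
      have "(\<forall>l. l \<notin> Q \<longrightarrow> x' l = x'' l) \<longleftrightarrow> (\<forall>i\<in>?R. x'' i = x' i)"
        using x' x'' by (auto simp: basis_def)
      thus ?thesis by (auto simp: lift_def)
    qed
    finally show "(\<Sum>x\<in>?BQ. \<Sum>w\<in>?BQ. hj x w * (?C * (if \<forall>i\<in>Q. w i = x'' i \<and> x i = x' i then 1 else 0)))
        = cnj (\<Gamma> x') * (lift Q hj x' x'' * \<Gamma> x'')" .
  qed
  also have "\<dots> = inner {..<n} \<Gamma> (apply_op {..<n} (lift Q hj) \<Gamma>)"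
    by (subst sum.swap) (simp add: inner_def apply_op_def sum_distrib_left)
  finally show ?thesis .
qed

definition Idop :: "lab qop" where "Idop = (\<lambda>x y. if x = y then 1 else 0)"

lemma lift_Id: "lift P Idop = Idop"
  by (auto simp: lift_def Idop_def restr_def fun_eq_iff)

lemma apply_Id: "finite L \<Longrightarrow> (\<And>x. x \<notin> basis L \<Longrightarrow> \<phi> x = 0) \<Longrightarrow> apply_op L Idop \<phi> = \<phi>"
proof
  fix x assume fL: "finite L" and z: "\<And>x. x \<notin> basis L \<Longrightarrow> \<phi> x = 0"
  have "apply_op L Idop \<phi> x = (\<Sum>y\<in>basis L. if x = y then \<phi> y else 0)"
    unfolding apply_op_def Idop_def by (intro sum.cong) auto
  also have "\<dots> = \<phi> x" using fL z by (simp add: sum.delta finite_basis)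
  finally show "apply_op L Idop \<phi> x = \<phi> x" .
qed

lemma unitary_Id: "finite L \<Longrightarrow> unitary_on L Idop"
proof -
  assume fL: "finite L"
  have "(\<Sum>z\<in>basis L. (if z = x then 1 else 0) * (if z = y then 1 else 0) :: complex) = (if x = y then 1 else 0)"
    if "x \<in> basis L" "y \<in> basis L" for x y
  proof -
    have "(\<Sum>z\<in>basis L. (if z = x then 1 else 0) * (if z = y then 1 else 0) :: complex) = (\<Sum>z\<in>basis L. if z = x then (if x = y then 1 else 0) else 0)"
      by (intro sum.cong) auto
    thus ?thesis using that fL by (simp add: sum.delta' finite_basis)
  qed
  note A = this
  have cif: "cnj (if P then 1 else 0) = (if P then 1 else (0::complex))" for P by simp
  have B: "(\<Sum>z\<in>basis L. (if x = z then 1 else 0) * cnj (if y = z then 1 else 0) :: complex) = (if x = y then 1 else 0)"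
    if "x \<in> basis L" "y \<in> basis L" for x y
  proof -
    have "(\<Sum>z\<in>basis L. (if x = z then 1 else 0) * cnj (if y = z then 1 else 0) :: complex)
       = (\<Sum>z\<in>basis L. (if z = x then 1 else 0) * (if z = y then 1 else 0))"
      by (intro sum.cong refl) (simp only: cif eq_commute)
    thus ?thesis using A[OF that] by simp
  qed
  have C: "(\<Sum>z\<in>basis L. cnj (if z = x then 1 else 0) * (if z = y then 1 else 0) :: complex) = (if x = y then 1 else 0)"
    if "x \<in> basis L" "y \<in> basis L" for x y
    using A[OF that] by (simp only: cif)
  show ?thesis unfolding unitary_on_def Idop_def using B C by blast
qed

lemma finite_prover_labels: "finite (prover_labels n d p)"
proof -
  have "prover_labels n d p = Sh p ` {..<n} \<union> Pv p ` {..<d}" by (auto simp: prover_labels_def)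
  thus ?thesis by simp
qed

lemma finite_all_labels: "finite (all_labels r n d)"
  by (simp add: all_labels_def finite_prover_labels)

lemma post_Id:
  assumes "\<And>x. x \<notin> basis (all_labels r n d) \<Longrightarrow> \<psi> x = 0"
  shows "post_state r n d \<psi> (\<lambda>p Q. Idop) Qs = \<psi>"
proof -
  have "foldr (\<lambda>p \<phi>. apply_op (all_labels r n d) (lift (prover_labels n d p) Idop) \<phi>) xs \<psi> = \<psi>" for xs
    by (induction xs) (simp_all add: lift_Id apply_Id[OF finite_all_labels] assms)
  thus ?thesis by (simp add: post_state_def)
qed

lemma ksets_card: "1 \<le> k \<Longrightarrow> k \<le> n \<Longrightarrow> i < n \<Longrightarrow> card (ksets n k i) \<noteq> 0"
proof -
  assume k: "1 \<le> k" "k \<le> n" and i: "i < n"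
  have fin: "finite (ksets n k i)"
    by (rule finite_subset[of _ "Pow {..<n}"]) (auto simp: ksets_def)
  have "(if i < k then {..<k} else insert i {..<k-1}) \<in> ksets n k i"
    using k i by (auto simp: ksets_def)
  hence "ksets n k i \<noteq> {}" by blast
  thus ?thesis using fin by simp
qed

lemma ham_split: "inner L \<Gamma> (apply_op L (hamiltonian m S h) \<Gamma>) = (\<Sum>j<m. inner L \<Gamma> (apply_op L (lift (S j) (h j)) \<Gamma>))"
proof -
  have "inner L \<Gamma> (apply_op L (hamiltonian m S h) \<Gamma>) = (\<Sum>x\<in>basis L. \<Sum>j<m. \<Sum>y\<in>basis L. cnj (\<Gamma> x) * (lift (S j) (h j) x y * \<Gamma> y))"
    unfolding inner_def apply_op_def hamiltonian_def
    by (simp add: sum_distrib_left sum_distrib_right sum.swap[of _ "basis L" "{..<m}"])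
  also have "\<dots> = (\<Sum>j<m. \<Sum>x\<in>basis L. \<Sum>y\<in>basis L. cnj (\<Gamma> x) * (lift (S j) (h j) x y * \<Gamma> y))"
    by (rule sum.swap)
  also have "\<dots> = (\<Sum>j<m. inner L \<Gamma> (apply_op L (lift (S j) (h j)) \<Gamma>))"
    by (simp add: inner_def apply_op_def sum_distrib_left)
  finally show ?thesis .
qed

theorem mainTheorem4:
  fixes n k m r :: nat and S :: "nat \<Rightarrow> nat set" and h :: "nat \<Rightarrow> nat qop"
    and enc :: "bool \<Rightarrow> nat qstate" and T :: "'c set"
    and K :: "'c \<Rightarrow> bool \<Rightarrow> nat bstate \<Rightarrow> complex"
    and a :: real and \<Gamma> :: "nat qstate"
  assumes "1 \<le> k" and "k \<le> n" and "1 \<le> m"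
    and "klh_instance n k m S h"
    and "valid_code r enc T K"
    and "corrects_single_paulis r enc T K"
    and "single_marginals_mixed r enc"
    and "a \<ge> 0"
    and "nrm2 {..<n} \<Gamma> = 1"
    and "Re (inner {..<n} \<Gamma> (apply_op {..<n} (hamiltonian m S h) \<Gamma>)) \<le> a * real m"
  shows "\<exists>d \<psi> U. valid_strategy r n d \<psi> U \<and>
           accept_prob n k m S h r enc T K d \<psi> U \<ge> 1 - a / 2"
proof -
  note k1 = assms(1) and kn = assms(2) and m1 = assms(3) and klh = assms(4) and vc = assms(5)
    and cs = assms(6) and nG = assms(9) and en = assms(10)
  have r: "0 < r"
  proof (rule ccontr)
    assume "\<not> 0 < r" hence r0: "r = 0" by simp
    have b0: "basis {..<0::nat} = {\<lambda>_. False}" by (auto simp: basis_def)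
    have "inner {..<r} (enc False) (enc False) = 1" "inner {..<r} (enc True) (enc True) = 1"
      "inner {..<r} (enc False) (enc True) = 0"
      using vc by (simp_all add: valid_code_def)
    hence h1: "cnj (enc False (\<lambda>_. False)) * enc False (\<lambda>_. False) = 1"
      and h2: "cnj (enc True (\<lambda>_. False)) * enc True (\<lambda>_. False) = 1"
      and h3: "cnj (enc False (\<lambda>_. False)) * enc True (\<lambda>_. False) = 0"
      using r0 b0 by (simp_all add: inner_def)
    from h3 have "cnj (enc False (\<lambda>_. False)) = 0 \<or> enc True (\<lambda>_. False) = 0" by simp
    thus False using h1 h2 by auto
  qed
  define \<psi> where "\<psi> = psiS r n enc \<Gamma>"
  define U where "U = (\<lambda>(p::nat) (Q::nat set). Idop)"
  have vanish: "\<psi> x = 0" if "x \<notin> basis (all_labels r n 0)" for x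
    using that by (simp add: \<psi>_def psiS_def all_labels0)
  have post: "post_state r n 0 \<psi> U Qs = \<psi>" for Qs
    unfolding U_def by (rule post_Id) (rule vanish)
  have vs: "valid_strategy r n 0 \<psi> U"
    unfolding valid_strategy_def U_def \<psi>_def all_labels0
    using psiS_norm[OF vc nG] unitary_Id[OF finite_prover_labels] by simp
  have t2: "test2_accept r n 0 enc i \<psi> = 1" if "i < n" for i
    unfolding \<psi>_def by (rule test2_one[OF vc nG that])
  have Sj: "S j \<subseteq> {..<n}" if "j < m" for j
    using klh that by (simp add: klh_instance_def)
  have t1: "test1_reject r n 0 T K (S j) (h j) \<psi> = Re (inner {..<n} \<Gamma> (apply_op {..<n} (lift (S j) (h j)) \<Gamma>))"
    if "j < m" for j
    unfolding \<psi>_def by (rule test1_val[OF vc cs r Sj[OF that]])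
  define X where "X = (\<Sum>j<m. Re (inner {..<n} \<Gamma> (apply_op {..<n} (lift (S j) (h j)) \<Gamma>)))"
  have X: "X \<le> a * real m"
    using en unfolding X_def ham_split by (simp add: Re_sum)
  have part2: "(1 / real n) * (\<Sum>i<n. (1 / real (card (ksets n k i))) * (\<Sum>Q\<in>ksets n k i.
          (1/2) * ((1 / real r) * (\<Sum>p0<r. test2_accept r n 0 enc i
                       (post_state r n 0 \<psi> U (\<lambda>p. if p = p0 then Q else {i}))))
        + (1/2) * test2_accept r n 0 enc i (post_state r n 0 \<psi> U (\<lambda>_. {i})))) = 1"
  proof -
    have "(1 / real (card (ksets n k i))) * (\<Sum>Q\<in>ksets n k i.
          (1/2) * ((1 / real r) * (\<Sum>p0<r. test2_accept r n 0 enc i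
                       (post_state r n 0 \<psi> U (\<lambda>p. if p = p0 then Q else {i}))))
        + (1/2) * test2_accept r n 0 enc i (post_state r n 0 \<psi> U (\<lambda>_. {i}))) = 1" if i: "i < n" for i
      using r ksets_card[OF k1 kn i] by (simp add: post t2[OF i])
    note each = this
    have "(\<Sum>i<n. (1 / real (card (ksets n k i))) * (\<Sum>Q\<in>ksets n k i.
          (1/2) * ((1 / real r) * (\<Sum>p0<r. test2_accept r n 0 enc i
                       (post_state r n 0 \<psi> U (\<lambda>p. if p = p0 then Q else {i}))))
        + (1/2) * test2_accept r n 0 enc i (post_state r n 0 \<psi> U (\<lambda>_. {i})))) = (\<Sum>i<n. (1::real))"
      by (intro sum.cong refl) (simp only: lessThan_iff each)
    hence "(\<Sum>i<n. (1 / real (card (ksets n k i))) * (\<Sum>Q\<in>ksets n k i.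
          (1/2) * ((1 / real r) * (\<Sum>p0<r. test2_accept r n 0 enc i
                       (post_state r n 0 \<psi> U (\<lambda>p. if p = p0 then Q else {i}))))
        + (1/2) * test2_accept r n 0 enc i (post_state r n 0 \<psi> U (\<lambda>_. {i})))) = real n" by simp
    thus ?thesis using k1 kn by simp
  qed
  have part1: "(\<Sum>j<m. 1 - test1_reject r n 0 T K (S j) (h j) (post_state r n 0 \<psi> U (\<lambda>_. S j))) = real m - X"
    unfolding X_def by (simp add: post t1 sum_subtractf)
  have acc: "accept_prob n k m S h r enc T K 0 \<psi> U = (1/2) * ((1 / real m) * (real m - X)) + 1/2"
    unfolding accept_prob_def part1 part2 by simp
  have "(1 / real m) * (real m - X) \<ge> 1 - a"
  proof -
    have mpos: "real m > 0" using m1 by simp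
    have "(1 / real m) * (real m - X) = 1 - X / real m" using mpos by (simp add: field_simps)
    moreover have "X / real m \<le> a" using X mpos by (simp add: divide_le_eq)
    ultimately show ?thesis by simp
  qed
  hence "accept_prob n k m S h r enc T K 0 \<psi> U \<ge> 1 - a / 2" unfolding acc by simp
  thus ?thesis using vs by blast
qed

end
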